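(* Consider $\dot x(t)=A_{\sigma(t)}x(t)+B_{\sigma(t)}u(t)$ with $A_i\in\mathbb{R}^{n\times n}$, $B_i\in\mathbb{R}^{n\times m}$, $i=1,\dots,N$, and let $\bar T>0$. Assume there exist continuously differentiable $X_i:[0,\bar T]\to\mathbb{D}^n$ with $X_i(\tau)$ nonsingular for all $\tau$ and $X_i(\bar T)\in\mathbb{D}^n_{\succ0}$, continuous $U_i:[0,\bar T]\to\mathbb{R}^{m\times n}$ ($i=1,\dots,N$) and scalars $\varepsilon,\alpha>0$ such that for all $\tau\in[0,\bar T]$ and all $i$: $A_iX_i(\tau)+B_iU_i(\tau)+\alpha I_n\ge0$, $\big[A_iX_i(\bar T)+B_iU_i(\bar T)\big]\mathbf{1}_n<0$, $\big[-\dot X_i(\tau)+A_iX_i(\tau)+B_iU_i(\tau)\big]\mathbf{1}_n<0$, and for all $i\ne j$: $\big[X_j(\bar T)-X_i(0)+\varepsilon I_n\big]\mathbf{1}_n\le0$. Let $K_i(\tau)=U_i(\tau)X_i(\tau)^{-1}$ and apply $u(t_k+\tau)=K_{\sigma(t_k^+)}(\tau)x(t_k+\tau)$ for $\tau\in[0,\bar T)$ and $u(t_k+\tau)=K_{\sigma(t_k^+)}(\bar T)x(t_k+\tau)$ for $\tau\in[\bar T,t_{k+1}-t_k)$, where $\sigma(t_k^+)$ is the mode active on $(t_k,t_{k+1}]$. Then the closed-loop system is positive and asymptotically stable under minimum dwell-time $\bar T$.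
   Context: $\mathbb{D}^n$ denotes $n\times n$ diagonal matrices, $\mathbb{D}^n_{\succ0}$ those with positive diagonal. Matrix/vector inequalities are entrywise; $\mathbf{1}_n$ is the vector of ones. The switching signal $\sigma$ is piecewise constant, left-continuous, with strictly increasing unbounded switching instants $t_k$. Positivity means $x(t)\ge0$ for all $t$ whenever $x(0)\ge0$. Asymptotic stability under minimum dwell-time $\bar T$ means global asymptotic stability of the origin for every switching signal with $\bar T\le t_{k+1}-t_k<\infty$. *)

theory Defs
  imports "HOL-Analysis.Analysis"
begin

(* Entrywise strict inequality of vectors (the library's < on vec is NOT entrywise strict). *)
definition ent_less :: "real^'n \<Rightarrow> real^'n \<Rightarrow> bool" where
  "ent_less x y \<longleftrightarrow> (\<forall>i. x$i < y$i)"

definition ones :: "real^'n" where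
  "ones = (\<chi> i. 1)"

definition diag_mat :: "real^'n^'n \<Rightarrow> bool" where
  "diag_mat M \<longleftrightarrow> (\<forall>i j. i \<noteq> j \<longrightarrow> M$i$j = 0)"

definition pos_diag_mat :: "real^'n^'n \<Rightarrow> bool" where
  "pos_diag_mat M \<longleftrightarrow> diag_mat M \<and> (\<forall>i. M$i$i > 0)"

(* Switching signal sigma on [0,oo) with modes in {1..N}, given by its switching
   instants t 0 = 0 < t 1 < t 2 < ... (unbounded) and the mode s k active on
   (t k, t (Suc k)]; the instants are genuine switches: s (Suc k) \<noteq> s k. *)
definition switching_signal :: "nat \<Rightarrow> (nat \<Rightarrow> real) \<Rightarrow> (nat \<Rightarrow> nat) \<Rightarrow> bool" where
  "switching_signal N t s \<longleftrightarrow>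
     t 0 = 0 \<and> strict_mono t \<and> (\<forall>M. \<exists>k. t k > M) \<and>
     (\<forall>k. s k \<in> {1..N}) \<and> (\<forall>k. s (Suc k) \<noteq> s k)"

definition dwell_time :: "real \<Rightarrow> (nat \<Rightarrow> real) \<Rightarrow> bool" where
  "dwell_time Tb t \<longleftrightarrow> (\<forall>k. Tb \<le> t (Suc k) - t k)"

definition closed_loop_solution ::
  "(nat \<Rightarrow> real^'n^'n) \<Rightarrow> (nat \<Rightarrow> real^'m^'n) \<Rightarrow> (nat \<Rightarrow> real \<Rightarrow> real^'n^'m) \<Rightarrow> real
   \<Rightarrow> (nat \<Rightarrow> real) \<Rightarrow> (nat \<Rightarrow> nat) \<Rightarrow> (real \<Rightarrow> real^'n) \<Rightarrow> bool" where
  "closed_loop_solution A B K Tb t s x \<longleftrightarrow>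
     continuous_on {0..} x \<and>
     (\<forall>k. \<forall>r\<in>{t k..t (Suc k)}.
        (x has_vector_derivative
           ((A (s k) *v x r) + (B (s k) *v (K (s k) (min (r - t k) Tb) *v x r))))
        (at r within {t k..t (Suc k)}))"

definition closed_loop_positive ::
  "nat \<Rightarrow> (nat \<Rightarrow> real^'n^'n) \<Rightarrow> (nat \<Rightarrow> real^'m^'n) \<Rightarrow> (nat \<Rightarrow> real \<Rightarrow> real^'n^'m) \<Rightarrow> real \<Rightarrow> bool" where
  "closed_loop_positive N A B K Tb \<longleftrightarrow>
     (\<forall>t s x. switching_signal N t s \<and> closed_loop_solution A B K Tb t s x \<and> x 0 \<ge> 0
        \<longrightarrow> (\<forall>r\<ge>0. x r \<ge> 0))"

definition closed_loop_GAS_dwell ::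
  "nat \<Rightarrow> (nat \<Rightarrow> real^'n^'n) \<Rightarrow> (nat \<Rightarrow> real^'m^'n) \<Rightarrow> (nat \<Rightarrow> real \<Rightarrow> real^'n^'m) \<Rightarrow> real \<Rightarrow> bool" where
  "closed_loop_GAS_dwell N A B K Tb \<longleftrightarrow>
     (\<forall>t s. switching_signal N t s \<and> dwell_time Tb t \<longrightarrow>
        (\<forall>e>0. \<exists>d>0. \<forall>x. closed_loop_solution A B K Tb t s x \<and> norm (x 0) < d
            \<longrightarrow> (\<forall>r\<ge>0. norm (x r) < e)) \<and>
        (\<forall>x. closed_loop_solution A B K Tb t s x \<longrightarrow> (x \<longlongrightarrow> 0) at_top))"

end

theory Submission
  imports Defs "HOL-Real_Asymp.Real_Asymp"
begin


lemma barrier: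
  fixes f :: "'k::finite \<Rightarrow> real \<Rightarrow> real" and h :: "real \<Rightarrow> real"
  assumes ab: "a \<le> b"
   and df: "\<And>k r. r \<in> {a..b} \<Longrightarrow> (f k has_real_derivative f' k r) (at r within {a..b})"
   and dh: "\<And>r. r \<in> {a..b} \<Longrightarrow> (h has_real_derivative h' r) (at r within {a..b})"
   and init: "\<And>k. f k a < h a"
   and touch: "\<And>k r. r \<in> {a<..b} \<Longrightarrow> f k r = h r \<Longrightarrow> (\<forall>l. f l r \<le> h r) \<Longrightarrow> f' k r < h' r"
   and r1: "r1 \<in> {a..b}"
  shows "f k1 r1 < h r1"
proof (rule ccontr)
  assume "\<not> f k1 r1 < h r1"
  hence r1S: "h r1 \<le> f k1 r1" by simp
  define S where "S = (\<Union>k. {r \<in> {a..b}. h r \<le> f k r})"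
  have cf: "continuous_on {a..b} (f k)" for k by (rule DERIV_continuous_on[OF df])
  have ch: "continuous_on {a..b} h" by (rule DERIV_continuous_on[OF dh])
  have clk: "closed {r \<in> {a..b}. h r \<le> f k r}" for k
    by (rule continuous_on_closed_Collect_le[OF ch cf]) auto
  have clS: "closed S" unfolding S_def
    by (intro closed_UN ballI clk finite)
  have Sne: "S \<noteq> {}" using r1 r1S unfolding S_def by auto
  have bS: "bdd_below S" unfolding S_def by (rule bdd_belowI[of _ a]) auto
  define r0 where "r0 = Inf S"
  have r0S: "r0 \<in> S" unfolding r0_def by (rule closed_contains_Inf[OF Sne bS clS])
  then obtain k0 where r0ab: "r0 \<in> {a..b}" and k0: "h r0 \<le> f k0 r0" unfolding S_def by auto
  have ar0: "a < r0" using r0ab k0 init[of k0] by (cases "r0 = a") auto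
  have below: "f k r < h r" if "r \<in> {a..<r0}" for k r
  proof (rule ccontr)
    assume "\<not> f k r < h r"
    hence "r \<in> S" using that r0ab unfolding S_def by (auto simp: not_less)
    hence "r0 \<le> r" unfolding r0_def using bS by (rule cInf_lower)
    thus False using that by auto
  qed
  have allle: "f l r0 \<le> h r0" for l
  proof (rule ccontr)
    assume "\<not> f l r0 \<le> h r0"
    hence pos: "f l r0 - h r0 > 0" by simp
    have "continuous_on {a..b} (\<lambda>r. f l r - h r)" by (intro continuous_intros cf ch)
    hence "continuous (at r0 within {a..b}) (\<lambda>r. f l r - h r)"
      using r0ab continuous_on_eq_continuous_within by blast
    then obtain d where d: "d > 0" and dd: "\<And>r'. r' \<in> {a..b} \<Longrightarrow> dist r' r0 < d \<Longrightarrow>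
        dist (f l r' - h r') (f l r0 - h r0) < f l r0 - h r0"
      using pos unfolding continuous_within_eps_delta by metis
    define r' where "r' = max a (r0 - d/2)"
    have r'ab: "r' \<in> {a..b}" "r' \<in> {a..<r0}" using r0ab ar0 d unfolding r'_def by auto
    have "dist r' r0 < d" using r0ab ar0 d unfolding r'_def dist_real_def by auto
    from dd[OF r'ab(1) this] have "f l r' - h r' > 0" unfolding dist_real_def by auto
    with below[OF r'ab(2), of l] show False by auto
  qed
  have eq: "f k0 r0 = h r0" using k0 allle[of k0] by auto
  have lt: "f' k0 r0 - h' r0 < 0" using touch[of r0 k0] r0ab ar0 eq allle by auto
  have "((\<lambda>r. f k0 r - h r) has_real_derivative (f' k0 r0 - h' r0)) (at r0 within {a..b})"
    by (intro derivative_intros df dh r0ab)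
  from has_real_derivative_neg_dec_left[OF this lt] obtain d where d: "d > 0"
    and dd: "\<And>e. e > 0 \<Longrightarrow> r0 - e \<in> {a..b} \<Longrightarrow> e < d \<Longrightarrow> f k0 r0 - h r0 < f k0 (r0 - e) - h (r0 - e)"
    by blast
  define e where "e = min d (r0 - a) / 2"
  have e: "e > 0" "r0 - e \<in> {a..b}" "e < d" "r0 - e \<in> {a..<r0}" using d ar0 r0ab unfolding e_def by (auto simp: min_def field_simps)
  from dd[OF e(1-3)] eq below[OF e(4), of k0] show False by auto
qed




lemma metz_sum:
  fixes W :: "real^'n^'n"
  assumes "\<And>l. l \<noteq> j \<Longrightarrow> 0 \<le> W$j$l" "z$j = h" "\<And>l. z$l \<le> h"
  shows "(W *v z)$j \<le> h * (W *v ones)$j"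
proof -
  have "(W *v z)$j = (\<Sum>l\<in>UNIV. W$j$l * z$l)" by (simp add: matrix_vector_mult_def)
  also have "\<dots> \<le> (\<Sum>l\<in>UNIV. W$j$l * h)"
  proof (rule sum_mono)
    fix l :: 'n
    show "W$j$l * z$l \<le> W$j$l * h"
      using assms by (cases "l = j") (auto intro: mult_left_mono)
  qed
  also have "\<dots> = h * (W *v ones)$j"
    by (simp add: matrix_vector_mult_def ones_def sum_distrib_left mult.commute)
  finally show ?thesis .
qed

lemma mvneg: "((W::real^'n^'m) *v (- z))$j = - ((W *v z)$j)"
  by (simp add: matrix_vector_mult_def sum_negf)

locale piece =
  fixes a b c :: real and y :: "real \<Rightarrow> real^'n" and G :: "real \<Rightarrow> real^'n^'n"
  assumes ab: "a \<le> b" and c: "c > 0"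
   and dy: "\<And>j r. r\<in>{a..b} \<Longrightarrow> ((\<lambda>r. y r $ j) has_real_derivative (G r *v y r) $ j) (at r within {a..b})"
   and metz: "\<And>r j l. r\<in>{a..b} \<Longrightarrow> j \<noteq> l \<Longrightarrow> 0 \<le> G r $ j $ l"
   and marg: "\<And>r j. r\<in>{a..b} \<Longrightarrow> (G r *v ones) $ j \<le> -c"
begin

lemma pos:
  assumes y0: "\<And>j. 0 \<le> y a $ j" and r: "r \<in> {a..b}"
  shows "0 \<le> y r $ j"
proof (rule ccontr)
  assume neg: "\<not> 0 \<le> y r $ j"
  define \<delta> where "\<delta> = - (y r $ j)"
  have d0: "\<delta> > 0" using neg unfolding \<delta>_def by simp
  have "- (y r $ j) < \<delta>"
  proof (rule barrier[OF ab, where f="\<lambda>j r. - (y r $ j)" and h="\<lambda>r. \<delta>" and f'="\<lambda>j r. - ((G r *v y r) $ j)" and h'="\<lambda>r. 0"])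
    show "((\<lambda>r. - (y r $ j)) has_real_derivative - ((G r *v y r) $ j)) (at r within {a..b})"
      if "r \<in> {a..b}" for j r by (intro derivative_intros dy that)
    show "((\<lambda>r. \<delta>) has_real_derivative 0) (at r within {a..b})" for r by (rule derivative_intros)
    show "- (y a $ j) < \<delta>" for j using y0[of j] d0 by simp
    show "r \<in> {a..b}" by (rule r)
    fix k r assume rr: "r \<in> {a<..b}" and eq: "- (y r $ k) = \<delta>" and le: "\<forall>l. - (y r $ l) \<le> \<delta>"
    have rab: "r \<in> {a..b}" using rr by auto
    have "(G r *v (- y r))$k \<le> \<delta> * (G r *v ones)$k"
      by (rule metz_sum) (use metz[OF rab] eq le in auto)
    also have "\<dots> \<le> \<delta> * (-c)" using marg[OF rab, of k] d0 by (intro mult_left_mono) auto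
    also have "\<dots> < 0" using d0 c by (simp add: mult_pos_pos)
    finally show "- ((G r *v y r) $ k) < 0" by (simp add: mvneg)
  qed
  thus False unfolding \<delta>_def by simp
qed

lemma decay:
  assumes y0: "\<And>j. \<bar>y a $ j\<bar> \<le> M" and r: "r \<in> {a..b}"
  shows "\<bar>y r $ j\<bar> \<le> M * exp (-(c/2)*(r-a))"
proof (rule ccontr)
  let ?e = "exp (-(c/2)*(r-a))"
  assume neg: "\<not> \<bar>y r $ j\<bar> \<le> M * ?e"
  have M0: "M \<ge> 0" using y0[of j] by linarith
  define \<delta> where "\<delta> = (\<bar>y r $ j\<bar> - M * ?e) / ?e"
  have d0: "\<delta> > 0" using neg unfolding \<delta>_def by simp
  have hrr: "(M + \<delta>) * ?e = \<bar>y r $ j\<bar>" unfolding \<delta>_def by (simp add: field_simps)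
  define f where "f = (\<lambda>(j,bb) r. if bb then y r $ j else - (y r $ j))"
  define f' where "f' = (\<lambda>(j,bb) r. if bb then (G r *v y r) $ j else - ((G r *v y r) $ j))"
  define h where "h = (\<lambda>r. (M + \<delta>) * exp (-(c/2)*(r-a)))"
  define h' where "h' = (\<lambda>r. (M + \<delta>) * (exp (-(c/2)*(r-a)) * (-(c/2))))"
  have hpos: "h r > 0" for r unfolding h_def using M0 d0 by (intro mult_pos_pos) auto
  have "f (j, y r $ j \<ge> 0) r < h r"
  proof (rule barrier[OF ab, where f=f and h=h and f'=f' and h'=h'])
    show "(f k has_real_derivative f' k r) (at r within {a..b})"
      if "r \<in> {a..b}" for k r unfolding f_def f'_def
      by (cases k) (auto intro!: derivative_intros dy that)
    show "(h has_real_derivative h' r) (at r within {a..b})" for r unfolding h_def h'_def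
      by (auto intro!: derivative_eq_intros)
    show "f k a < h a" for k using y0[of "fst k"] d0 unfolding f_def h_def
      by (cases k) auto
    show "r \<in> {a..b}" by (rule r)
    fix k r assume rr: "r \<in> {a<..b}" and eq: "f k r = h r" and le: "\<forall>l. f l r \<le> h r"
    have rab: "r \<in> {a..b}" using rr by auto
    obtain jj bb where k: "k = (jj, bb)" by (cases k)
    have leP: "y r $ l \<le> h r" for l using le[rule_format, of "(l,True)"] unfolding f_def by simp
    have leN: "(- y r) $ l \<le> h r" for l using le[rule_format, of "(l,False)"] unfolding f_def by simp
    have hc: "h r * (G r *v ones)$jj \<le> h r * (-c)" using marg[OF rab, of jj] hpos[of r]
      by (intro mult_left_mono) auto
    have "h' r = h r * (-(c/2))" unfolding h_def h'_def by simp
    hence lt: "h r * (-c) < h' r" using hpos[of r] c by (simp add: mult_less_cancel_left_pos)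
    show "f' k r < h' r"
    proof (cases bb)
      case True
      have "(G r *v y r)$jj \<le> h r * (G r *v ones)$jj"
        by (rule metz_sum) (use metz[OF rab] eq leP k True in \<open>auto simp: f_def\<close>)
      thus ?thesis using hc lt k True unfolding f'_def by simp
    next
      case False
      have "(G r *v (- y r))$jj \<le> h r * (G r *v ones)$jj"
        by (rule metz_sum) (use metz[OF rab] eq leN k False in \<open>auto simp: f_def\<close>)
      thus ?thesis using hc lt k False unfolding f'_def by (simp add: mvneg)
    qed
  qed
  hence "\<bar>y r $ j\<bar> < h r" unfolding f_def by (auto split: if_splits)
  thus False using hrr unfolding h_def by simp
qed

end




lemma vd_comp:
  assumes "(f has_vector_derivative f') F"
  shows "((\<lambda>t. f t $ i) has_real_derivative (f' $ i)) F"
  using bounded_linear.has_derivative[OF bounded_linear_vec_nth assms[unfolded has_vector_derivative_def]]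
  by (simp add: has_field_derivative_def mult_commute_abs)

lemma vd_comp2:
  assumes "(f has_vector_derivative f') F"
  shows "((\<lambda>t. f t $ i $ j) has_real_derivative (f' $ i $ j)) F"
proof -
  have "((\<lambda>t. f t $ i) has_vector_derivative (f' $ i)) F"
    using bounded_linear.has_derivative[OF bounded_linear_vec_nth assms[unfolded has_vector_derivative_def]]
    by (simp add: has_vector_derivative_def)
  thus ?thesis by (rule vd_comp)
qed

definition dinv :: "real^'n^'n \<Rightarrow> real^'n^'n" where
  "dinv X = (\<chi> j l. if j = l then 1 / X$j$j else 0)"

lemma dinv_right:
  assumes "diag_mat X" "\<And>j. X$j$j \<noteq> 0"
  shows "X ** dinv X = mat 1"
proof -
  have "(X ** dinv X)$j$l = mat 1 $ j $ l" for j l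
  proof -
    have "(X ** dinv X)$j$l = (\<Sum>m\<in>UNIV. X$j$m * (if m = l then 1 / X$m$m else 0))"
      by (simp add: matrix_matrix_mult_def dinv_def)
    also have "\<dots> = X$j$l * (1 / X$l$l)"
      by (simp add: if_distrib[of "\<lambda>z. X$j$_ * z"] cong: if_cong)
    also have "\<dots> = mat 1 $ j $ l" using assms unfolding diag_mat_def mat_def by auto
    finally show ?thesis .
  qed
  thus ?thesis by (simp add: vec_eq_iff)
qed

lemma dinv_left:
  assumes "diag_mat X" "\<And>j. X$j$j \<noteq> 0"
  shows "dinv X ** X = mat 1"
proof -
  have "(dinv X ** X)$j$l = mat 1 $ j $ l" for j l
  proof -
    have "(dinv X ** X)$j$l = (\<Sum>m\<in>UNIV. (if j = m then 1 / X$j$j else 0) * X$m$l)"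
      by (simp add: matrix_matrix_mult_def dinv_def)
    also have "\<dots> = (1 / X$j$j) * X$j$l"
      by (simp add: if_distrib[of "\<lambda>z. z * X$_$l"] cong: if_cong)
    also have "\<dots> = mat 1 $ j $ l" using assms unfolding diag_mat_def mat_def by auto
    finally show ?thesis .
  qed
  thus ?thesis by (simp add: vec_eq_iff)
qed

lemma matrix_inv_diag:
  assumes "diag_mat X" "\<And>j. X$j$j \<noteq> 0"
  shows "matrix_inv X = dinv X"
proof -
  have ex: "\<exists>A'. X ** A' = mat 1 \<and> A' ** X = mat 1"
    using dinv_right[OF assms] dinv_left[OF assms] by blast
  define Z where "Z = matrix_inv X"
  have Z: "X ** Z = mat 1" "Z ** X = mat 1"
    using someI_ex[OF ex] unfolding Z_def matrix_inv_def by auto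
  have "Z = Z ** (X ** dinv X)" using dinv_right[OF assms] by (simp add: matrix_mul_rid)
  also have "\<dots> = (Z ** X) ** dinv X" by (simp add: matrix_mul_assoc)
  also have "\<dots> = dinv X" using Z by (simp add: matrix_mul_lid)
  finally show ?thesis unfolding Z_def .
qed

lemma dinv_mv: "(dinv X *v x)$j = x$j / X$j$j"
  by (simp add: dinv_def matrix_vector_mult_def if_distrib[of "\<lambda>z. z * x$_"] cong: if_cong)

lemma diag_mv: "diag_mat X \<Longrightarrow> (X *v x)$j = X$j$j * x$j"
proof -
  assume d: "diag_mat X"
  have "(\<Sum>l\<in>UNIV. X$j$l * x$l) = (\<Sum>l\<in>UNIV. (if l = j then X$j$j * x$j else 0))"
    by (rule sum.cong) (use d in \<open>auto simp: diag_mat_def\<close>)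
  hence "(X *v x)$j = (\<Sum>l\<in>UNIV. (if l = j then X$j$j * x$j else 0))"
    by (simp add: matrix_vector_mult_def)
  thus ?thesis by simp
qed




lemma dinv_mm: "(dinv X ** W)$j$l = W$j$l / X$j$j"
  by (simp add: dinv_def matrix_matrix_mult_def if_distrib[of "\<lambda>z. z * W$_$l"] cong: if_cong)

lemma uminus_mv: "((- M) *v y)$j = - ((M *v (y::real^'n))$j)"
  unfolding matrix_vector_mult_def by (simp add: sum_negf[symmetric] vector_uminus_component)

lemma diff_mv: "((M - N) *v y)$j = (M *v y)$j - (N *v (y::real^'n))$j"
  unfolding matrix_vector_mult_def by (simp add: sum_subtractf[symmetric] left_diff_distrib vector_minus_component)

lemma gen_piece:
  fixes A :: "real^'n^'n" and B :: "real^'m^'n" and Xr dXr :: "real \<Rightarrow> real^'n^'n"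
    and Ur :: "real \<Rightarrow> real^'n^'m" and x :: "real \<Rightarrow> real^'n"
  assumes ab: "a \<le> b" and c: "c > 0"
  and dXr: "\<And>r. r\<in>{a..b} \<Longrightarrow> (Xr has_vector_derivative dXr r) (at r within {a..b})"
  and dg: "\<And>r. r\<in>{a..b} \<Longrightarrow> diag_mat (Xr r)"
  and ddg: "\<And>r. r\<in>{a..b} \<Longrightarrow> diag_mat (dXr r)"
  and lp: "\<And>r j. r\<in>{a..b} \<Longrightarrow> Xr r $j$j > 0"
  and dx: "\<And>r. r\<in>{a..b} \<Longrightarrow> (x has_vector_derivative (A *v x r + B *v ((Ur r ** matrix_inv (Xr r)) *v x r))) (at r within {a..b})"
  and metz: "\<And>r j l. r\<in>{a..b} \<Longrightarrow> j\<noteq>l \<Longrightarrow> 0 \<le> (A ** Xr r + B ** Ur r)$j$l"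
  and marg: "\<And>r j. r\<in>{a..b} \<Longrightarrow> ((-dXr r + A ** Xr r + B ** Ur r) *v ones)$j \<le> -c * Xr r $j$j"
  shows "piece a b c (\<lambda>r. dinv (Xr r) *v x r) (\<lambda>r. dinv (Xr r) ** (-dXr r + A ** Xr r + B ** Ur r))"
proof
  show "a \<le> b" "c > 0" by fact+
  fix r assume r: "r \<in> {a..b}"
  let ?X = "Xr r" and ?W = "-dXr r + A ** Xr r + B ** Ur r"
  have nz: "\<And>j. ?X$j$j \<noteq> 0" using lp[OF r] by (metis less_irrefl)
  have mi: "matrix_inv ?X = dinv ?X" by (rule matrix_inv_diag[OF dg[OF r] nz])
  {
    fix j l :: 'n assume jl: "j \<noteq> l"
    have "?W$j$l = (A ** Xr r + B ** Ur r)$j$l"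
      using ddg[OF r] jl by (simp add: diag_mat_def)
    hence "0 \<le> ?W$j$l" using metz[OF r jl] by simp
    thus "0 \<le> (dinv ?X ** ?W)$j$l" using lp[OF r, of j] by (simp add: dinv_mm)
  }
  {
    fix j :: 'n
    have "(dinv ?X ** ?W *v ones)$j = (dinv ?X *v (?W *v ones))$j"
      by (simp add: matrix_vector_mul_assoc)
    also have "\<dots> = (?W *v ones)$j / ?X$j$j" by (rule dinv_mv)
    also have "\<dots> \<le> -c" using marg[OF r, of j] lp[OF r, of j] by (simp add: divide_le_eq)
    finally show "(dinv ?X ** ?W *v ones)$j \<le> -c" .
  }
  {
    fix j :: 'n
    let ?y = "dinv ?X *v x r"
    let ?x' = "A *v x r + B *v ((Ur r ** matrix_inv (Xr r)) *v x r)"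
    have xy: "?X *v ?y = x r" using dinv_right[OF dg[OF r] nz]
      by (simp add: matrix_vector_mul_assoc)
    have x'eq: "?x' = (A ** ?X) *v ?y + (B ** Ur r) *v ?y"
      unfolding mi by (simp add: matrix_vector_mul_assoc[symmetric] xy)
    have Wy: "(?W *v ?y)$j = - (dXr r $j$j * ?y$j) + ?x' $ j"
      unfolding x'eq by (simp add: matrix_vector_mult_add_rdistrib uminus_mv diff_mv diag_mv[OF ddg[OF r]])
    have yj: "?y$j = x r $ j / ?X$j$j" by (rule dinv_mv)
    have d1: "((\<lambda>r. x r $ j) has_real_derivative ?x' $ j) (at r within {a..b})"
      by (rule vd_comp[OF dx[OF r]])
    have d2: "((\<lambda>r. Xr r $ j $ j) has_real_derivative dXr r $ j $ j) (at r within {a..b})"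
      by (rule vd_comp2[OF dXr[OF r]])
    have "((\<lambda>r. x r $ j / Xr r $ j $ j) has_real_derivative
        ((?x' $ j) * ?X$j$j - x r $ j * dXr r $ j $ j) / (?X$j$j * ?X$j$j)) (at r within {a..b})"
      by (rule DERIV_divide[OF d1 d2 nz])
    moreover have "((?x' $ j) * ?X$j$j - x r $ j * dXr r $ j $ j) / (?X$j$j * ?X$j$j)
        = (dinv ?X ** ?W *v ?y)$j"
    proof -
      have "(dinv ?X ** ?W *v ?y)$j = (?W *v ?y)$j / ?X$j$j"
        by (simp add: matrix_vector_mul_assoc[symmetric] dinv_mv)
      thus ?thesis unfolding Wy yj using nz[of j] by (simp add: field_simps power2_eq_square)
    qed
    moreover have "(\<lambda>r. (dinv (Xr r) *v x r) $ j) = (\<lambda>r. x r $ j / Xr r $ j $ j)"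
      by (simp add: dinv_mv)
    ultimately show "((\<lambda>r. (dinv (Xr r) *v x r) $ j) has_real_derivative
        (dinv (Xr r) ** (-dXr r + A ** Xr r + B ** Ur r) *v (dinv (Xr r) *v x r)) $ j) (at r within {a..b})"
      by simp
  }
qed

lemma gp_pos:
  assumes P: "piece a b c (\<lambda>r. dinv (Xr r) *v x r) G"
    and lp: "\<And>r j. r\<in>{a..b} \<Longrightarrow> Xr r $j$j > (0::real)"
    and x0: "\<And>j. 0 \<le> x a $ j" and r: "r \<in> {a..b}"
  shows "0 \<le> x r $ j"
proof -
  interpret piece a b c "\<lambda>r. dinv (Xr r) *v x r" G by (rule P)
  have "0 \<le> (dinv (Xr r) *v x r) $ j"
  proof (rule pos[OF _ r])
    fix l
    have "0 \<le> x a $ l / Xr a $l$l" using x0[of l] lp[of a l] ab by simp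
    thus "0 \<le> (dinv (Xr a) *v x a) $ l" by (simp only: dinv_mv)
  qed
  hence "0 \<le> x r $ j / Xr r $j$j" by (simp only: dinv_mv)
  thus ?thesis using lp[OF r, of j] by (simp add: zero_le_divide_iff)
qed

lemma gp_decay:
  assumes P: "piece a b c (\<lambda>r. dinv (Xr r) *v x r) G"
    and lp: "\<And>r j. r\<in>{a..b} \<Longrightarrow> Xr r $j$j > (0::real)"
    and x0: "\<And>j. \<bar>x a $ j\<bar> \<le> M * Xr a $j$j" and r: "r \<in> {a..b}"
  shows "\<bar>x r $ j\<bar> \<le> M * exp (-(c/2)*(r-a)) * Xr r $j$j"
proof -
  interpret piece a b c "\<lambda>r. dinv (Xr r) *v x r" G by (rule P)
  have "\<bar>(dinv (Xr r) *v x r) $ j\<bar> \<le> M * exp (-(c/2)*(r-a))"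
  proof (rule decay[OF _ r])
    fix l
    have L: "Xr a $l$l > 0" using lp[of a l] ab by simp
    have "\<bar>x a $ l / Xr a $l$l\<bar> = \<bar>x a $ l\<bar> / Xr a $l$l" using L by simp
    also have "\<dots> \<le> M" using x0[of l] L by (simp add: divide_le_eq)
    finally show "\<bar>(dinv (Xr a) *v x a) $ l\<bar> \<le> M" by (simp only: dinv_mv)
  qed
  hence "\<bar>x r $ j / Xr r $j$j\<bar> \<le> M * exp (-(c/2)*(r-a))" by (simp only: dinv_mv)
  moreover have L: "Xr r $j$j > 0" using lp[OF r] by simp
  ultimately have "\<bar>x r $ j\<bar> / Xr r $j$j \<le> M * exp (-(c/2)*(r-a))" by simp
  thus ?thesis using L by (simp add: divide_le_eq)
qed




lemma cont_mm_left:
  fixes F :: "real \<Rightarrow> real^'k^'m" and A :: "real^'m^'n"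
  assumes "continuous_on S F"
  shows "continuous_on S (\<lambda>t. A ** F t)"
  unfolding matrix_matrix_mult_def
  by (intro continuous_on_vec_lambda continuous_intros continuous_on_component assms)

lemma cont_mv_ones:
  fixes F :: "real \<Rightarrow> real^'n^'m"
  assumes "continuous_on S F"
  shows "continuous_on S (\<lambda>t. (F t *v ones) $ j)"
  unfolding matrix_vector_mult_def ones_def
  by (simp, intro continuous_intros continuous_on_component assms)

lemma neg_margin:
  fixes g :: "'p \<Rightarrow> real \<Rightarrow> real"
  assumes fin: "finite I" and T: "0 \<le> T"
    and cg: "\<And>p. p \<in> I \<Longrightarrow> continuous_on {0..T} (g p)"
    and neg: "\<And>p t. p \<in> I \<Longrightarrow> t \<in> {0..T} \<Longrightarrow> g p t < 0"
  shows "\<exists>c>0. \<forall>p\<in>I. \<forall>t\<in>{0..T}. g p t \<le> -c"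
  using fin cg neg
proof (induction I rule: finite_induct)
  case empty show ?case by (intro exI[of _ 1]) auto
next
  case (insert p I)
  then obtain c1 where c1: "c1 > 0" "\<forall>q\<in>I. \<forall>t\<in>{0..T}. g q t \<le> -c1" by auto
  obtain t0 where t0: "t0 \<in> {0..T}" "\<forall>t\<in>{0..T}. g p t \<le> g p t0"
    using continuous_attains_sup[of "{0..T}" "g p"] insert.prems(1)[of p] T by auto
  have n: "g p t0 < 0" using insert.prems(2)[of p t0] t0 by auto
  have "g q t \<le> - min c1 (-g p t0)" if "q \<in> insert p I" "t\<in>{0..T}" for q t
  proof (cases "q = p")
    case True
    then have "g q t \<le> g p t0" using t0 that by auto
    then show ?thesis by linarith
  next
    case False then have "g q t \<le> -c1" using c1 that by auto
    then show ?thesis by linarith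
  qed
  thus ?case using c1 n by (intro exI[of _ "min c1 (- g p t0)"]) auto
qed

lemma upper_bound:
  fixes g :: "'p \<Rightarrow> real \<Rightarrow> real"
  assumes fin: "finite I" and T: "0 \<le> T"
    and cg: "\<And>p. p \<in> I \<Longrightarrow> continuous_on {0..T} (g p)"
  shows "\<exists>C. \<forall>p\<in>I. \<forall>t\<in>{0..T}. g p t \<le> C"
  using fin cg
proof (induction I rule: finite_induct)
  case empty show ?case by auto
next
  case (insert p I)
  then obtain c1 where c1: "\<forall>q\<in>I. \<forall>t\<in>{0..T}. g q t \<le> c1" by auto
  obtain t0 where t0: "t0 \<in> {0..T}" "\<forall>t\<in>{0..T}. g p t \<le> g p t0"
    using continuous_attains_sup[of "{0..T}" "g p"] insert.prems(1)[of p] T by auto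
  have "g q t \<le> max c1 (g p t0)" if "q \<in> insert p I" "t\<in>{0..T}" for q t
  proof (cases "q = p")
    case True
    then have "g q t \<le> g p t0" using t0 that by auto
    then show ?thesis by linarith
  next
    case False then have "g q t \<le> c1" using c1 that by auto
    then show ?thesis by linarith
  qed
  thus ?case by blast
qed

locale clsys =
  fixes A :: "nat \<Rightarrow> real^'n^'n" and B :: "nat \<Rightarrow> real^'m^'n" and N :: nat
    and Tb \<epsilon> \<alpha> :: real
    and X dX :: "nat \<Rightarrow> real \<Rightarrow> real^'n^'n" and U :: "nat \<Rightarrow> real \<Rightarrow> real^'n^'m"
  assumes Tb: "Tb > 0" and eps: "\<epsilon> > 0" and alpha: "\<alpha> > 0"
    and X_deriv: "\<forall>i\<in>{1..N}. \<forall>\<tau>\<in>{0..Tb}.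
                    (X i has_vector_derivative dX i \<tau>) (at \<tau> within {0..Tb})"
    and dX_cont: "\<forall>i\<in>{1..N}. continuous_on {0..Tb} (dX i)"
    and X_diag: "\<forall>i\<in>{1..N}. \<forall>\<tau>\<in>{0..Tb}. diag_mat (X i \<tau>) \<and> invertible (X i \<tau>)"
    and X_end: "\<forall>i\<in>{1..N}. pos_diag_mat (X i Tb)"
    and U_cont: "\<forall>i\<in>{1..N}. continuous_on {0..Tb} (U i)"
    and c1: "\<forall>i\<in>{1..N}. \<forall>\<tau>\<in>{0..Tb}. A i ** X i \<tau> + B i ** U i \<tau> + \<alpha> *\<^sub>R mat 1 \<ge> 0"
    and c2: "\<forall>i\<in>{1..N}. ent_less ((A i ** X i Tb + B i ** U i Tb) *v ones) 0"
    and c3: "\<forall>i\<in>{1..N}. \<forall>\<tau>\<in>{0..Tb}.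
               ent_less ((- dX i \<tau> + A i ** X i \<tau> + B i ** U i \<tau>) *v ones) 0"
    and c4: "\<forall>i\<in>{1..N}. \<forall>j\<in>{1..N}. i \<noteq> j \<longrightarrow>
               (X j Tb - X i 0 + \<epsilon> *\<^sub>R mat 1) *v ones \<le> 0"
begin

lemma Xd: "i \<in> {1..N} \<Longrightarrow> \<tau> \<in> {0..Tb} \<Longrightarrow> (X i has_vector_derivative dX i \<tau>) (at \<tau> within {0..Tb})"
  using X_deriv by auto

lemma X_cont: "i \<in> {1..N} \<Longrightarrow> continuous_on {0..Tb} (X i)"
  using Xd has_vector_derivative_continuous continuous_on_eq_continuous_within by blast

lemma diagX: "i \<in> {1..N} \<Longrightarrow> \<tau> \<in> {0..Tb} \<Longrightarrow> diag_mat (X i \<tau>)"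
  using X_diag by auto

lemma lam_nz: assumes "i \<in> {1..N}" "\<tau> \<in> {0..Tb}" shows "X i \<tau> $j$j \<noteq> 0"
proof -
  have "invertible (X i \<tau>)" using X_diag assms by auto
  then obtain Y where Y: "X i \<tau> ** Y = mat 1" unfolding invertible_def by auto
  have "(X i \<tau> ** Y)$j$j = (\<Sum>m\<in>UNIV. X i \<tau> $j$m * Y$m$j)" by (simp add: matrix_matrix_mult_def)
  also have "\<dots> = (\<Sum>m\<in>UNIV. if m = j then X i \<tau> $j$j * Y$j$j else 0)"
    by (rule sum.cong) (use diagX[OF assms] in \<open>auto simp: diag_mat_def\<close>)
  also have "\<dots> = X i \<tau> $j$j * Y$j$j" by simp
  finally have "X i \<tau> $j$j * Y$j$j = 1" using Y by (simp add: mat_def)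
  thus ?thesis by auto
qed

lemma lam_pos: assumes i: "i \<in> {1..N}" and t: "\<tau> \<in> {0..Tb}" shows "X i \<tau> $j$j > 0"
proof (rule ccontr)
  assume "\<not> X i \<tau> $j$j > 0"
  hence le: "X i \<tau> $j$j \<le> 0" by simp
  have end_pos: "X i Tb $j$j > 0" using X_end i unfolding pos_diag_mat_def by auto
  have "continuous_on {0..Tb} (\<lambda>s. X i s $ j $ j)"
    by (intro continuous_on_component X_cont i)
  hence "continuous_on {\<tau>..Tb} (\<lambda>s. X i s $ j $ j)"
    by (rule continuous_on_subset) (use t in auto)
  then obtain s where s: "\<tau> \<le> s" "s \<le> Tb" "X i s $j$j = 0"
    using IVT'[of "\<lambda>s. X i s $ j $ j" \<tau> 0 Tb] le end_pos t by auto
  thus False using lam_nz[OF i, of s j] t by auto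
qed

lemma dX_diag: assumes i: "i \<in> {1..N}" and t: "\<tau> \<in> {0..Tb}" shows "diag_mat (dX i \<tau>)"
  unfolding diag_mat_def
proof (intro allI impI)
  fix j l :: 'n assume jl: "j \<noteq> l"
  have d1: "((\<lambda>s. X i s $ j $ l) has_vector_derivative dX i \<tau> $ j $ l) (at \<tau> within {0..Tb})"
    using vd_comp2[OF Xd[OF i t]] by (simp add: has_real_derivative_iff_has_vector_derivative)
  have d0: "((\<lambda>s. X i s $ j $ l) has_vector_derivative 0) (at \<tau> within {0..Tb})"
  proof (rule has_vector_derivative_transform_within[of "\<lambda>_. 0" 0 \<tau> "{0..Tb}" 1])
    show "((\<lambda>_. 0) has_vector_derivative 0) (at \<tau> within {0..Tb})" by (rule derivative_intros)
  qed (use t diagX[OF i] jl in \<open>auto simp: diag_mat_def\<close>)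
  have "dX i \<tau> $ j $ l = 0"
    by (rule vector_derivative_unique_within_closed_interval[of 0 Tb \<tau>])
       (use Tb t d1 d0 in auto)
  thus "dX i \<tau> $ j $ l = 0" .
qed

end




context clsys begin

lemma ii: "i \<in> {1..N} \<Longrightarrow> \<tau> \<in> {0..Tb} \<Longrightarrow> P i \<tau>" if "\<forall>i\<in>{1..N}. \<forall>\<tau>\<in>{0..Tb}. P i \<tau>" for P
  using that by auto

lemma W_cont: "i \<in> {1..N} \<Longrightarrow> continuous_on {0..Tb} (\<lambda>\<tau>. - dX i \<tau> + A i ** X i \<tau> + B i ** U i \<tau>)"
  using dX_cont U_cont X_cont by (intro continuous_intros cont_mm_left) auto

definition marg_ok :: "real \<Rightarrow> bool" where
  "marg_ok c \<longleftrightarrow> c > 0 \<and>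
     (\<forall>i\<in>{1..N}. \<forall>\<tau>\<in>{0..Tb}. \<forall>j. ((- dX i \<tau> + A i ** X i \<tau> + B i ** U i \<tau>) *v ones)$j \<le> -c * X i \<tau> $j$j) \<and>
     (\<forall>i\<in>{1..N}. \<forall>j. ((A i ** X i Tb + B i ** U i Tb) *v ones)$j \<le> -c * X i Tb $j$j)"

lemma margin_exists: "\<exists>c. marg_ok c"
proof -
  let ?I = "{1..N} \<times> (UNIV :: 'n set)"
  obtain c1 where c1: "c1 > 0" and c1m: "\<forall>p\<in>?I. \<forall>t\<in>{0..Tb}.
      (\<lambda>(i,j) \<tau>. ((- dX i \<tau> + A i ** X i \<tau> + B i ** U i \<tau>) *v ones)$j / X i \<tau> $j$j) p t \<le> -c1"
  proof -
    have "\<exists>c>0. \<forall>p\<in>?I. \<forall>t\<in>{0..Tb}.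
      (\<lambda>(i,j) \<tau>. ((- dX i \<tau> + A i ** X i \<tau> + B i ** U i \<tau>) *v ones)$j / X i \<tau> $j$j) p t \<le> -c"
    proof (rule neg_margin)
      show "finite ?I" by simp
      show "0 \<le> Tb" using Tb by simp
    next
      fix p assume p: "p \<in> ?I"
      obtain i j where pij: "p = (i,j)" by (cases p)
      have i: "i \<in> {1..N}" using p pij by auto
      show "continuous_on {0..Tb} ((\<lambda>(i,j) \<tau>. ((- dX i \<tau> + A i ** X i \<tau> + B i ** U i \<tau>) *v ones)$j / X i \<tau> $j$j) p)"
      proof -
        have "continuous_on {0..Tb} (\<lambda>\<tau>. ((- dX i \<tau> + A i ** X i \<tau> + B i ** U i \<tau>) *v ones)$j / X i \<tau> $j$j)"
          by (rule continuous_on_divide[OF cont_mv_ones[OF W_cont[OF i]]])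
             (use lam_nz[OF i] in \<open>auto intro!: continuous_on_component X_cont i\<close>)
        thus ?thesis by (simp only: pij prod.case)
      qed
    next
      fix p t assume p: "p \<in> ?I" and t: "t \<in> {0..Tb}"
      obtain i j where pij: "p = (i,j)" by (cases p)
      have i: "i \<in> {1..N}" using p pij by auto
      have "((- dX i t + A i ** X i t + B i ** U i t) *v ones)$j < 0"
        using c3 i t unfolding ent_less_def by auto
      thus "(\<lambda>(i,j) \<tau>. ((- dX i \<tau> + A i ** X i \<tau> + B i ** U i \<tau>) *v ones)$j / X i \<tau> $j$j) p t < 0"
        unfolding pij using lam_pos[OF i t, of j] by (simp add: divide_less_0_iff)
    qed
    thus ?thesis using that by blast
  qed
  obtain c2 where c2: "c2 > 0" and c2m: "\<forall>p\<in>?I. \<forall>t\<in>{0..0::real}.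
      (\<lambda>(i,j) \<tau>. ((A i ** X i Tb + B i ** U i Tb) *v ones)$j / X i Tb $j$j) p t \<le> -c2"
  proof -
    have "\<exists>c>0. \<forall>p\<in>?I. \<forall>t\<in>{0..0::real}.
      (\<lambda>(i,j) \<tau>. ((A i ** X i Tb + B i ** U i Tb) *v ones)$j / X i Tb $j$j) p t \<le> -c"
    proof (rule neg_margin[where T=0 and g="\<lambda>(i,j) \<tau>. ((A i ** X i Tb + B i ** U i Tb) *v ones)$j / X i Tb $j$j"])
      fix p t assume p: "p \<in> ?I" and t: "t \<in> {0..(0::real)}"
      obtain i j where pij: "p = (i,j)" by (cases p)
      have i: "i \<in> {1..N}" using p pij by auto
      have "((A i ** X i Tb + B i ** U i Tb) *v ones)$j < 0"
        using c2 i unfolding ent_less_def by auto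
      thus "(\<lambda>(i,j) \<tau>. ((A i ** X i Tb + B i ** U i Tb) *v ones)$j / X i Tb $j$j) p t < 0"
        unfolding pij using lam_pos[OF i, of Tb j] Tb by (simp add: divide_less_0_iff)
    qed (auto simp: case_prod_beta intro: continuous_on_const)
    thus ?thesis using that by blast
  qed
  define c where "c = min c1 c2"
  have "marg_ok c"
    unfolding marg_ok_def
  proof (intro conjI ballI allI)
    show "c > 0" using c1 c2 unfolding c_def by simp
  next
    fix i \<tau> j assume i: "i \<in> {1..N}" and t: "\<tau> \<in> {0..Tb}"
    have "((- dX i \<tau> + A i ** X i \<tau> + B i ** U i \<tau>) *v ones)$j / X i \<tau> $j$j \<le> -c1"
      using c1m i t by auto
    hence "((- dX i \<tau> + A i ** X i \<tau> + B i ** U i \<tau>) *v ones)$j \<le> -c1 * X i \<tau> $j$j"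
      using lam_pos[OF i t, of j] by (simp add: divide_le_eq)
    moreover have "-c1 * X i \<tau> $j$j \<le> -c * X i \<tau> $j$j"
      using lam_pos[OF i t, of j] unfolding c_def by (intro mult_right_mono) auto
    ultimately show "((- dX i \<tau> + A i ** X i \<tau> + B i ** U i \<tau>) *v ones)$j \<le> -c * X i \<tau> $j$j"
      by linarith
  next
    fix i j assume i: "i \<in> {1..N}"
    have t: "Tb \<in> {0..Tb}" using Tb by simp
    have "((A i ** X i Tb + B i ** U i Tb) *v ones)$j / X i Tb $j$j \<le> -c2"
      using c2m i by auto
    hence "((A i ** X i Tb + B i ** U i Tb) *v ones)$j \<le> -c2 * X i Tb $j$j"
      using lam_pos[OF i t, of j] by (simp add: divide_le_eq)
    moreover have "-c2 * X i Tb $j$j \<le> -c * X i Tb $j$j"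
      using lam_pos[OF i t, of j] unfolding c_def by (intro mult_right_mono) auto
    ultimately show "((A i ** X i Tb + B i ** U i Tb) *v ones)$j \<le> -c * X i Tb $j$j"
      by linarith
  qed
  thus ?thesis by blast
qed

lemma lam_lower: "\<exists>l>0. \<forall>i\<in>{1..N}. \<forall>\<tau>\<in>{0..Tb}. \<forall>j. l \<le> X i \<tau> $j$j"
proof -
  let ?I = "{1..N} \<times> (UNIV :: 'n set)"
  have "\<exists>c>0. \<forall>p\<in>?I. \<forall>t\<in>{0..Tb}. (\<lambda>(i,j) \<tau>. - X i \<tau> $j$j) p t \<le> -c"
  proof (rule neg_margin)
    show "0 \<le> Tb" using Tb by simp
    fix p assume p: "p \<in> ?I"
    obtain i j where pij: "p = (i,j)" by (cases p)
    have i: "i \<in> {1..N}" using p pij by auto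
    show "continuous_on {0..Tb} ((\<lambda>(i,j) \<tau>. - X i \<tau> $j$j) p)" unfolding pij
      by (auto intro!: continuous_intros continuous_on_component X_cont i)
    fix t assume t: "t \<in> {0..Tb}"
    show "(\<lambda>(i,j) \<tau>. - X i \<tau> $j$j) p t < 0" unfolding pij using lam_pos[OF i t] by simp
  qed simp
  thus ?thesis by fastforce
qed

lemma lam_upper: "\<exists>L. \<forall>i\<in>{1..N}. \<forall>\<tau>\<in>{0..Tb}. \<forall>j. X i \<tau> $j$j \<le> L"
proof -
  let ?I = "{1..N} \<times> (UNIV :: 'n set)"
  have "\<exists>C. \<forall>p\<in>?I. \<forall>t\<in>{0..Tb}. (\<lambda>(i,j) \<tau>. X i \<tau> $j$j) p t \<le> C"
  proof (rule upper_bound)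
    show "0 \<le> Tb" using Tb by simp
    fix p assume p: "p \<in> ?I"
    obtain i j where pij: "p = (i,j)" by (cases p)
    have i: "i \<in> {1..N}" using p pij by auto
    show "continuous_on {0..Tb} ((\<lambda>(i,j) \<tau>. X i \<tau> $j$j) p)" unfolding pij
      by (auto intro!: continuous_intros continuous_on_component X_cont i)
  qed simp
  thus ?thesis by fastforce
qed

end




context clsys begin

lemma metz_c1: assumes i: "i \<in> {1..N}" and t: "\<tau> \<in> {0..Tb}" and jl: "j \<noteq> l"
  shows "0 \<le> (A i ** X i \<tau> + B i ** U i \<tau>)$j$l"
proof -
  have "0 \<le> (A i ** X i \<tau> + B i ** U i \<tau> + \<alpha> *\<^sub>R mat 1)$j$l"
    using c1 i t unfolding less_eq_vec_def by auto
  thus ?thesis using jl by (simp add: mat_def)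
qed

lemma interval:
  fixes x :: "real \<Rightarrow> real^'n"
  assumes mc: "marg_ok c" and i: "i \<in> {1..N}" and ab: "a \<le> b"
    and dx: "\<And>r. r\<in>{a..b} \<Longrightarrow> (x has_vector_derivative
        (A i *v x r + B i *v ((U i (min (r-a) Tb) ** matrix_inv (X i (min (r-a) Tb))) *v x r)))
        (at r within {a..b})"
  shows "((\<forall>j. 0 \<le> x a $ j) \<longrightarrow> (\<forall>r\<in>{a..b}. \<forall>j. 0 \<le> x r $ j)) \<and>
         ((\<forall>j. \<bar>x a $ j\<bar> \<le> M * X i 0 $j$j) \<longrightarrow>
            (\<forall>r\<in>{a..b}. \<forall>j. \<bar>x r $ j\<bar> \<le> M * exp (-(c/2)*(r-a)) * X i (min (r-a) Tb) $j$j))"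
proof -
  have c: "c > 0" using mc unfolding marg_ok_def by auto
  define b1 where "b1 = min b (a + Tb)"
  have ab1: "a \<le> b1" "b1 \<le> b" using ab Tb unfolding b1_def by auto
  have sub1: "{a..b1} \<subseteq> {a..b}" using ab1 by auto
  have tin: "r - a \<in> {0..Tb}" if "r \<in> {a..b1}" for r using that unfolding b1_def by auto
  have P1: "piece a b1 c (\<lambda>r. dinv (X i (r - a)) *v x r)
      (\<lambda>r. dinv (X i (r - a)) ** (-dX i (r - a) + A i ** X i (r - a) + B i ** U i (r - a)))"
  proof (rule gen_piece[OF ab1(1) c])
    fix r assume r: "r \<in> {a..b1}"
    show "((\<lambda>r. X i (r - a)) has_vector_derivative dX i (r - a)) (at r within {a..b1})"
    proof -
      have d1: "((\<lambda>r. r - a) has_vector_derivative 1) (at r within {a..b1})"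
        by (auto intro!: derivative_eq_intros)
      have "(X i has_vector_derivative dX i (r - a)) (at (r - a) within (\<lambda>r. r - a) ` {a..b1})"
        by (rule has_vector_derivative_within_subset[OF Xd[OF i tin[OF r]]]) (use tin in auto)
      from vector_diff_chain_within[OF d1 this] show ?thesis by (simp add: o_def)
    qed
    show "diag_mat (X i (r - a))" by (rule diagX[OF i tin[OF r]])
    show "diag_mat (dX i (r - a))" by (rule dX_diag[OF i tin[OF r]])
    show "X i (r - a) $j$j > 0" for j by (rule lam_pos[OF i tin[OF r]])
    have mr: "min (r - a) Tb = r - a" using tin[OF r] by auto
    show "(x has_vector_derivative (A i *v x r + B i *v ((U i (r - a) ** matrix_inv (X i (r - a))) *v x r)))
        (at r within {a..b1})"
      using has_vector_derivative_within_subset[OF dx[of r] sub1] r sub1 mr by auto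
    show "0 \<le> (A i ** X i (r - a) + B i ** U i (r - a))$j$l" if "j \<noteq> l" for j l
      by (rule metz_c1[OF i tin[OF r] that])
    show "((-dX i (r - a) + A i ** X i (r - a) + B i ** U i (r - a)) *v ones)$j \<le> -c * X i (r - a) $j$j" for j
      using mc i tin[OF r] unfolding marg_ok_def by auto
  qed
  have lp1: "\<And>r j. r\<in>{a..b1} \<Longrightarrow> X i (r - a) $j$j > 0" by (rule lam_pos[OF i tin])
  show ?thesis
  proof (cases "b \<le> a + Tb")
    case True
    hence bb: "b1 = b" unfolding b1_def by simp
    have mr: "min (r - a) Tb = r - a" if "r \<in> {a..b}" for r using that True by auto
    show ?thesis
    proof (intro conjI impI ballI allI)
      fix r j assume x0: "\<forall>j. 0 \<le> x a $ j" and r: "r \<in> {a..b}"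
      show "0 \<le> x r $ j" by (rule gp_pos[OF P1 lp1]) (use x0 r bb in auto)
    next
      fix r j assume x0: "\<forall>j. \<bar>x a $ j\<bar> \<le> M * X i 0 $j$j" and r: "r \<in> {a..b}"
      have "\<bar>x r $ j\<bar> \<le> M * exp (-(c/2)*(r-a)) * X i (r - a) $j$j"
        by (rule gp_decay[OF P1 lp1]) (use x0 r bb in auto)
      thus "\<bar>x r $ j\<bar> \<le> M * exp (-(c/2)*(r-a)) * X i (min (r-a) Tb) $j$j" using mr[OF r] by simp
    qed
  next
    case False
    hence bb: "b1 = a + Tb" unfolding b1_def by simp
    have ab2: "a + Tb \<le> b" using False by simp
    have sub2: "{a+Tb..b} \<subseteq> {a..b}" using Tb by auto
    have TT: "Tb \<in> {0..Tb}" using Tb by auto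
    have P2: "piece (a+Tb) b c (\<lambda>r. dinv ((\<lambda>_. X i Tb) r) *v x r)
      (\<lambda>r. dinv ((\<lambda>_. X i Tb) r) ** (- (\<lambda>_. 0) r + A i ** (\<lambda>_. X i Tb) r + B i ** (\<lambda>_. U i Tb) r))"
    proof (rule gen_piece[OF ab2 c])
      fix r assume r: "r \<in> {a+Tb..b}"
      show "((\<lambda>_. X i Tb) has_vector_derivative 0) (at r within {a+Tb..b})"
        by (rule derivative_intros)
      show "diag_mat (X i Tb)" by (rule diagX[OF i TT])
      show "diag_mat (0::real^'n^'n)" by (simp add: diag_mat_def)
      show "X i Tb $j$j > 0" for j by (rule lam_pos[OF i TT])
      have mr: "min (r - a) Tb = Tb" using r by auto
      show "(x has_vector_derivative (A i *v x r + B i *v ((U i Tb ** matrix_inv (X i Tb)) *v x r)))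
          (at r within {a+Tb..b})"
        using has_vector_derivative_within_subset[OF dx[of r] sub2] r sub2 mr by auto
      show "0 \<le> (A i ** X i Tb + B i ** U i Tb)$j$l" if "j \<noteq> l" for j l
        by (rule metz_c1[OF i TT that])
      show "((-0 + A i ** X i Tb + B i ** U i Tb) *v ones)$j \<le> -c * X i Tb $j$j" for j
        using mc i unfolding marg_ok_def by auto
    qed
    have lp2: "\<And>r j. r\<in>{a+Tb..b} \<Longrightarrow> (\<lambda>_. X i Tb) r $j$j > 0" using lam_pos[OF i TT] by simp
    have aT1: "a + Tb \<in> {a..b1}" using bb Tb by auto
    show ?thesis
    proof (intro conjI impI ballI allI)
      fix r j assume x0: "\<forall>j. 0 \<le> x a $ j" and r: "r \<in> {a..b}"
      have x0': "\<And>j. 0 \<le> x a $ j" using x0 by blast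
      show "0 \<le> x r $ j"
      proof (cases "r \<le> a + Tb")
        case True
        have "r \<in> {a..b1}" using True r bb by simp
        from gp_pos[OF P1 lp1 x0' this] show ?thesis .
      next
        case False
        have x1: "\<And>l. 0 \<le> x (a+Tb) $ l" using gp_pos[OF P1 lp1 x0' aT1] .
        have "r \<in> {a+Tb..b}" using False r by simp
        from gp_pos[OF P2 lp2 x1 this] show ?thesis .
      qed
    next
      fix r j assume x0: "\<forall>j. \<bar>x a $ j\<bar> \<le> M * X i 0 $j$j" and r: "r \<in> {a..b}"
      show "\<bar>x r $ j\<bar> \<le> M * exp (-(c/2)*(r-a)) * X i (min (r-a) Tb) $j$j"
      proof (cases "r \<le> a + Tb")
        case True
        have mr: "min (r - a) Tb = r - a" using True by auto
        have "\<bar>x r $ j\<bar> \<le> M * exp (-(c/2)*(r-a)) * X i (r - a) $j$j"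
          by (rule gp_decay[OF P1 lp1]) (use x0 r bb True in auto)
        thus ?thesis using mr by simp
      next
        case False
        have mr: "min (r - a) Tb = Tb" using False by auto
        have "\<bar>x (a+Tb) $ l\<bar> \<le> M * exp (-(c/2)*(a+Tb-a)) * X i (a + Tb - a) $l$l" for l
          by (rule gp_decay[OF P1 lp1]) (use x0 aT1 in auto)
        hence "\<bar>x (a+Tb) $ l\<bar> \<le> (M * exp (-(c/2)*Tb)) * (\<lambda>_. X i Tb) (a+Tb) $l$l" for l by simp
        hence "\<bar>x r $ j\<bar> \<le> (M * exp (-(c/2)*Tb)) * exp (-(c/2)*(r-(a+Tb))) * (\<lambda>_. X i Tb) r $j$j"
          by (intro gp_decay[OF P2 lp2]) (use False r in auto)
        also have "(M * exp (-(c/2)*Tb)) * exp (-(c/2)*(r-(a+Tb))) = M * exp (-(c/2)*(r-a))"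
        proof -
          have "-(c/2)*Tb + -(c/2)*(r-(a+Tb)) = -(c/2)*(r-a)" by (simp add: field_simps)
          hence "exp (-(c/2)*Tb) * exp (-(c/2)*(r-(a+Tb))) = exp (-(c/2)*(r-a))"
            by (simp only: exp_add[symmetric])
          thus ?thesis by (simp only: mult.assoc)
        qed
        finally show ?thesis using mr by simp
      qed
    qed
  qed
qed

end




lemma find_interval:
  assumes sw: "switching_signal N t s" and r: "0 \<le> r"
  shows "\<exists>k. t k \<le> r \<and> r \<le> t (Suc k)"
proof -
  have t0: "t 0 = 0" and unb: "\<forall>M. \<exists>k. t k > M" and sm: "strict_mono t"
    using sw unfolding switching_signal_def by auto
  obtain K where K: "t K > r" using unb by auto
  define K0 where "K0 = (LEAST k. t k > r)"
  have K0: "t K0 > r" unfolding K0_def by (rule LeastI[of _ K], rule K)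
  have K0pos: "K0 \<noteq> 0" using K0 t0 r by (metis not_less)
  then obtain k where k: "K0 = Suc k" by (cases K0) auto
  have "\<not> t k > r" using Least_le[of "\<lambda>k. t k > r" k] unfolding K0_def[symmetric] k by auto
  thus ?thesis using K0 k by (intro exI[of _ k]) auto
qed

lemma tmono: "switching_signal N t s \<Longrightarrow> t k \<le> t (Suc k)"
  unfolding switching_signal_def strict_mono_def by (simp add: less_imp_le)

context clsys begin

abbreviation "KK \<equiv> (\<lambda>i \<tau>. U i \<tau> ** matrix_inv (X i \<tau>))"

lemma positive: "closed_loop_positive N A B KK Tb"
  unfolding closed_loop_positive_def
proof (intro allI impI)
  fix t s and x :: "real \<Rightarrow> real^'n" and r :: real
  assume H: "switching_signal N t s \<and> closed_loop_solution A B KK Tb t s x \<and> 0 \<le> x 0"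
    and r: "0 \<le> r"
  obtain c where mc: "marg_ok c" using margin_exists by blast
  have sw: "switching_signal N t s" using H by auto
  have sk: "s k \<in> {1..N}" for k using sw unfolding switching_signal_def by auto
  have t0: "t 0 = 0" using sw unfolding switching_signal_def by auto
  have dx: "\<And>r. r\<in>{t k..t (Suc k)} \<Longrightarrow> (x has_vector_derivative
        (A (s k) *v x r + B (s k) *v ((U (s k) (min (r - t k) Tb) ** matrix_inv (X (s k) (min (r - t k) Tb))) *v x r)))
        (at r within {t k..t (Suc k)})" for k
    using H unfolding closed_loop_solution_def by auto
  note IV = interval[OF mc sk tmono[OF sw] dx]
  have tk: "\<forall>j. 0 \<le> x (t k) $ j" for k
  proof (induction k)
    case 0 thus ?case using H t0 unfolding less_eq_vec_def by auto
  next
    case (Suc k)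
    thus ?case using IV[of k] tmono[OF sw, of k] by auto
  qed
  obtain k where k: "t k \<le> r" "r \<le> t (Suc k)" using find_interval[OF sw r] by blast
  show "0 \<le> x r" unfolding less_eq_vec_def using IV[of k] tk[of k] k by auto
qed

lemma switch_le:
  assumes i: "i \<in> {1..N}" and j: "j \<in> {1..N}" and ij: "i \<noteq> j"
  shows "X j Tb $l$l \<le> X i 0 $l$l"
proof -
  have TT: "Tb \<in> {0..Tb}" "0 \<in> {0..Tb}" using Tb by auto
  let ?M = "X j Tb - X i 0 + \<epsilon> *\<^sub>R mat 1"
  have dg: "diag_mat ?M" using diagX[OF j TT(1)] diagX[OF i TT(2)]
    unfolding diag_mat_def by (simp add: mat_def)
  have "(?M *v ones)$l \<le> 0" using c4 i j ij unfolding less_eq_vec_def by auto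
  hence "?M$l$l \<le> 0" using diag_mv[OF dg, of ones l] by (simp add: ones_def)
  hence "X j Tb $l$l - X i 0 $l$l + \<epsilon> \<le> 0" by (simp add: mat_def)
  thus ?thesis using eps by simp
qed

lemma GAS: "closed_loop_GAS_dwell N A B KK Tb"
  unfolding closed_loop_GAS_dwell_def
proof (intro allI impI)
  fix t s assume H: "switching_signal N t s \<and> dwell_time Tb t"
  obtain c where mc: "marg_ok c" using margin_exists by blast
  have c: "c > 0" using mc unfolding marg_ok_def by auto
  obtain l where l: "l > 0" "\<forall>i\<in>{1..N}. \<forall>\<tau>\<in>{0..Tb}. \<forall>j. l \<le> X i \<tau> $j$j" using lam_lower by blast
  obtain L where L: "\<forall>i\<in>{1..N}. \<forall>\<tau>\<in>{0..Tb}. \<forall>j. X i \<tau> $j$j \<le> L" using lam_upper by blast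
  have sw: "switching_signal N t s" using H by auto
  have dw: "Tb \<le> t (Suc k) - t k" for k using H unfolding dwell_time_def by auto
  have sk: "s k \<in> {1..N}" for k using sw unfolding switching_signal_def by auto
  have sne: "s (Suc k) \<noteq> s k" for k using sw unfolding switching_signal_def by auto
  have t0: "t 0 = 0" using sw unfolding switching_signal_def by auto
  have TT: "0 \<in> {0..Tb}" using Tb by simp
  have lL1: "l \<le> X (s 0) 0 $ j0 $ j0" for j0 using l(2) sk[of 0] TT by blast
  have lL2: "X (s 0) 0 $ j0 $ j0 \<le> L" for j0 using L sk[of 0] TT by blast
  have lL: "l \<le> L" using lL1 lL2 order_trans by blast
  define Q where "Q = real CARD('n) * L / l"
  have Q0: "Q \<ge> 0" unfolding Q_def using l lL by auto
  have bound: "norm (x r) \<le> Q * norm (x 0) * exp (-(c/2)*r)"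
    if sol: "closed_loop_solution A B KK Tb t s x" and r: "0 \<le> r" for x :: "real \<Rightarrow> real^'n" and r
  proof -
    define M where "M = norm (x 0) / l"
    have M0: "M \<ge> 0" unfolding M_def using l by auto
    have dx: "\<And>r. r\<in>{t k..t (Suc k)} \<Longrightarrow> (x has_vector_derivative
          (A (s k) *v x r + B (s k) *v ((U (s k) (min (r - t k) Tb) ** matrix_inv (X (s k) (min (r - t k) Tb))) *v x r)))
          (at r within {t k..t (Suc k)})" for k
      using sol unfolding closed_loop_solution_def by auto
    note IV = interval[OF mc sk tmono[OF sw] dx]
    have tk: "\<forall>j. \<bar>x (t k) $ j\<bar> \<le> (M * exp (-(c/2) * t k)) * X (s k) 0 $j$j" for k
    proof (induction k)
      case 0
      show ?case
      proof
        fix j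
        have "\<bar>x (t 0) $ j\<bar> \<le> norm (x 0)" using t0 component_le_norm_cart by simp
        also have "\<dots> = M * l" unfolding M_def using l by simp
        also have "\<dots> \<le> M * X (s 0) 0 $j$j" using l sk[of 0] Tb M0 by (intro mult_left_mono) auto
        finally show "\<bar>x (t 0) $ j\<bar> \<le> (M * exp (-(c/2) * t 0)) * X (s 0) 0 $j$j" using t0 by simp
      qed
    next
      case (Suc k)
      show ?case
      proof
        fix j
        have mk: "min (t (Suc k) - t k) Tb = Tb" using dw[of k] by simp
        have "\<bar>x (t (Suc k)) $ j\<bar> \<le> (M * exp (-(c/2) * t k)) * exp (-(c/2)*(t (Suc k) - t k))
              * X (s k) (min (t (Suc k) - t k) Tb) $j$j"
          using IV[of k "M * exp (-(c/2) * t k)"] Suc tmono[OF sw, of k] by auto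
        also have "(M * exp (-(c/2) * t k)) * exp (-(c/2)*(t (Suc k) - t k)) = M * exp (-(c/2) * t (Suc k))"
        proof -
          have "-(c/2) * t k + -(c/2)*(t (Suc k) - t k) = -(c/2) * t (Suc k)" by (simp add: field_simps)
          hence "exp (-(c/2) * t k) * exp (-(c/2)*(t (Suc k) - t k)) = exp (-(c/2) * t (Suc k))"
            by (simp only: exp_add[symmetric])
          thus ?thesis by (simp only: mult.assoc)
        qed
        also have "X (s k) (min (t (Suc k) - t k) Tb) $j$j \<le> X (s (Suc k)) 0 $j$j"
          unfolding mk by (rule switch_le[OF sk sk sne])
        finally show "\<bar>x (t (Suc k)) $ j\<bar> \<le> (M * exp (-(c/2) * t (Suc k))) * X (s (Suc k)) 0 $j$j"
          using M0 by (simp add: mult_left_mono)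
      qed
    qed
    obtain k where k: "t k \<le> r" "r \<le> t (Suc k)" using find_interval[OF sw r] by blast
    have comp: "\<bar>x r $ j\<bar> \<le> M * exp (-(c/2)*r) * L" for j
    proof -
      have "\<bar>x r $ j\<bar> \<le> (M * exp (-(c/2) * t k)) * exp (-(c/2)*(r - t k)) * X (s k) (min (r - t k) Tb) $j$j"
        using IV[of k "M * exp (-(c/2) * t k)"] tk[of k] k by auto
      also have "(M * exp (-(c/2) * t k)) * exp (-(c/2)*(r - t k)) = M * exp (-(c/2) * r)"
      proof -
        have "-(c/2) * t k + -(c/2)*(r - t k) = -(c/2) * r" by (simp add: field_simps)
        hence "exp (-(c/2) * t k) * exp (-(c/2)*(r - t k)) = exp (-(c/2) * r)"
          by (simp only: exp_add[symmetric])
        thus ?thesis by (simp only: mult.assoc)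
      qed
      also have "X (s k) (min (r - t k) Tb) $j$j \<le> L" using L sk[of k] k Tb by auto
      finally show ?thesis using M0 by (simp add: mult_left_mono)
    qed
    have "norm (x r) \<le> (\<Sum>j\<in>UNIV. \<bar>x r $ j\<bar>)" by (rule norm_le_l1_cart)
    also have "\<dots> \<le> (\<Sum>j\<in>(UNIV::'n set). M * exp (-(c/2)*r) * L)" by (rule sum_mono) (rule comp)
    also have "\<dots> = Q * norm (x 0) * exp (-(c/2)*r)" unfolding Q_def M_def using l by simp
    finally show ?thesis .
  qed
  show "(\<forall>e>0. \<exists>d>0. \<forall>x. closed_loop_solution A B KK Tb t s x \<and> norm (x 0) < d
            \<longrightarrow> (\<forall>r\<ge>0. norm (x r) < e)) \<and>
        (\<forall>x. closed_loop_solution A B KK Tb t s x \<longrightarrow> (x \<longlongrightarrow> 0) at_top)"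
  proof (intro conjI allI impI)
    fix e :: real assume e: "e > 0"
    show "\<exists>d>0. \<forall>x. closed_loop_solution A B KK Tb t s x \<and> norm (x 0) < d
            \<longrightarrow> (\<forall>r\<ge>0. norm (x r) < e)"
    proof (intro exI[of _ "e / (Q + 1)"] conjI allI impI)
      show "e / (Q + 1) > 0" using e Q0 by simp
      fix x :: "real \<Rightarrow> real^'n" and r :: real
      assume xs: "closed_loop_solution A B KK Tb t s x \<and> norm (x 0) < e / (Q + 1)" and r: "0 \<le> r"
      have "norm (x r) \<le> Q * norm (x 0) * exp (-(c/2)*r)" using bound xs r by auto
      also have "\<dots> \<le> Q * norm (x 0)" using Q0 c r by (simp add: mult_left_le)
      also have "\<dots> \<le> Q * (e / (Q + 1))" using xs Q0 by (intro mult_left_mono) auto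
      also have "\<dots> < e" using e Q0 by (simp add: field_simps)
      finally show "norm (x r) < e" .
    qed
  next
    fix x :: "real \<Rightarrow> real^'n"
    assume xs: "closed_loop_solution A B KK Tb t s x"
    show "(x \<longlongrightarrow> 0) at_top"
    proof (rule Lim_null_comparison)
      show "\<forall>\<^sub>F r in at_top. norm (x r) \<le> Q * norm (x 0) * exp (-(c/2)*r)"
        using eventually_ge_at_top[of "0::real"] by (rule eventually_mono) (rule bound[OF xs])
      show "((\<lambda>r. Q * norm (x 0) * exp (-(c/2)*r)) \<longlongrightarrow> 0) at_top" using c by real_asymp
    qed
  qed
qed

end


theorem corollary5:
  fixes A :: "nat \<Rightarrow> real^'n^'n" and B :: "nat \<Rightarrow> real^'m^'n" and N :: nat
    and Tb \<epsilon> \<alpha> :: real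
    and X dX :: "nat \<Rightarrow> real \<Rightarrow> real^'n^'n" and U :: "nat \<Rightarrow> real \<Rightarrow> real^'n^'m"
  assumes Tb: "Tb > 0" and eps: "\<epsilon> > 0" and alpha: "\<alpha> > 0"
    and X_deriv: "\<forall>i\<in>{1..N}. \<forall>\<tau>\<in>{0..Tb}.
                    (X i has_vector_derivative dX i \<tau>) (at \<tau> within {0..Tb})"
    and dX_cont: "\<forall>i\<in>{1..N}. continuous_on {0..Tb} (dX i)"
    and X_diag: "\<forall>i\<in>{1..N}. \<forall>\<tau>\<in>{0..Tb}. diag_mat (X i \<tau>) \<and> invertible (X i \<tau>)"
    and X_end: "\<forall>i\<in>{1..N}. pos_diag_mat (X i Tb)"
    and U_cont: "\<forall>i\<in>{1..N}. continuous_on {0..Tb} (U i)"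
    and c1: "\<forall>i\<in>{1..N}. \<forall>\<tau>\<in>{0..Tb}. A i ** X i \<tau> + B i ** U i \<tau> + \<alpha> *\<^sub>R mat 1 \<ge> 0"
    and c2: "\<forall>i\<in>{1..N}. ent_less ((A i ** X i Tb + B i ** U i Tb) *v ones) 0"
    and c3: "\<forall>i\<in>{1..N}. \<forall>\<tau>\<in>{0..Tb}.
               ent_less ((- dX i \<tau> + A i ** X i \<tau> + B i ** U i \<tau>) *v ones) 0"
    and c4: "\<forall>i\<in>{1..N}. \<forall>j\<in>{1..N}. i \<noteq> j \<longrightarrow>
               (X j Tb - X i 0 + \<epsilon> *\<^sub>R mat 1) *v ones \<le> 0"
  shows "closed_loop_positive N A B (\<lambda>i \<tau>. U i \<tau> ** matrix_inv (X i \<tau>)) Tb \<and>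
         closed_loop_GAS_dwell N A B (\<lambda>i \<tau>. U i \<tau> ** matrix_inv (X i \<tau>)) Tb"
proof -
  interpret clsys A B N Tb \<epsilon> \<alpha> X dX U
    by (rule clsys.intro[OF Tb eps alpha X_deriv dX_cont X_diag X_end U_cont c1 c2 c3 c4])
  show ?thesis using positive GAS by simp
qed

end
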